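(* Let $G$ be a finite group with $G=\langle x,y\rangle$, where $x$ has order $3$ and $y$ has order at least $4$. Then $\mathrm{Cay}(G,\{x,y\})$ is an oriented regular representation (ORR) of $G$, unless $y$ has order $6$, $x=y^4$, and $G\cong\mathbb{Z}_6$.
   Context: For a group $G$ and $S\subseteq G$, the Cayley digraph $\mathrm{Cay}(G,S)$ has vertex set $G$, and $(u,v)$ is an arc whenever $vu^{-1}\in S$. Its automorphism group consists of the permutations of $G$ preserving the arc set, and always contains the right regular representation of $G$. $\mathrm{Cay}(G,S)$ is an oriented regular representation (ORR) if its automorphism group equals the right regular representation of $G$ and it is a proper digraph, i.e. $(u,v)$ being an arc implies $(v,u)$ is not an arc (equivalently $S\cap S^{-1}=\emptyset$). *)

theory Defs
  imports "HOL-Algebra.Multiplicative_Group" "HOL-Algebra.Elementary_Groups"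
begin

definition cay_arc :: "('a, 'b) monoid_scheme \<Rightarrow> 'a set \<Rightarrow> 'a \<Rightarrow> 'a \<Rightarrow> bool" where
  "cay_arc G S u v \<longleftrightarrow> u \<in> carrier G \<and> v \<in> carrier G \<and> v \<otimes>\<^bsub>G\<^esub> inv\<^bsub>G\<^esub> u \<in> S"

definition cay_aut :: "('a, 'b) monoid_scheme \<Rightarrow> 'a set \<Rightarrow> ('a \<Rightarrow> 'a) set" where
  "cay_aut G S = {\<sigma>. bij_betw \<sigma> (carrier G) (carrier G) \<and> \<sigma> \<in> extensional (carrier G) \<and>
      (\<forall>u\<in>carrier G. \<forall>v\<in>carrier G. cay_arc G S u v \<longleftrightarrow> cay_arc G S (\<sigma> u) (\<sigma> v))}"

definition right_regular :: "('a, 'b) monoid_scheme \<Rightarrow> ('a \<Rightarrow> 'a) set" where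
  "right_regular G = (\<lambda>g. restrict (\<lambda>u. u \<otimes>\<^bsub>G\<^esub> g) (carrier G)) ` carrier G"

definition proper_cay :: "('a, 'b) monoid_scheme \<Rightarrow> 'a set \<Rightarrow> bool" where
  "proper_cay G S \<longleftrightarrow> (\<forall>u v. cay_arc G S u v \<longrightarrow> \<not> cay_arc G S v u)"

definition is_ORR :: "('a, 'b) monoid_scheme \<Rightarrow> 'a set \<Rightarrow> bool" where
  "is_ORR G S \<longleftrightarrow> cay_aut G S = right_regular G \<and> proper_cay G S"

end

theory Submission
  imports Defs
begin


lemma (in group) arc_iff:
  assumes "S \<subseteq> carrier G"
  shows "cay_arc G S a b \<longleftrightarrow> a \<in> carrier G \<and> (\<exists>s\<in>S. b = s \<otimes> a)"
proof
  assume h: "cay_arc G S a b"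
  then have a: "a \<in> carrier G" and b: "b \<in> carrier G" and s: "b \<otimes> inv a \<in> S"
    by (auto simp: cay_arc_def)
  have "b = (b \<otimes> inv a) \<otimes> a" using a b by (simp add: m_assoc)
  then show "a \<in> carrier G \<and> (\<exists>s\<in>S. b = s \<otimes> a)" using a s by blast
next
  assume "a \<in> carrier G \<and> (\<exists>s\<in>S. b = s \<otimes> a)"
  then obtain s where a: "a \<in> carrier G" and s: "s \<in> S" and b: "b = s \<otimes> a" by blast
  have sc: "s \<in> carrier G" using s assms by blast
  have "b \<otimes> inv a = s" using a sc b by (simp add: m_assoc)
  then show "cay_arc G S a b" using a sc s b by (simp add: cay_arc_def)
qed

lemma (in group) rr_sub:
  assumes "S \<subseteq> carrier G"
  shows "right_regular G \<subseteq> cay_aut G S"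
proof
  fix \<sigma> assume "\<sigma> \<in> right_regular G"
  then obtain g where g: "g \<in> carrier G" and sd: "\<sigma> = restrict (\<lambda>u. u \<otimes> g) (carrier G)"
    by (auto simp: right_regular_def)
  have inj: "inj_on \<sigma> (carrier G)" using g by (auto simp: sd inj_on_def)
  have "\<sigma> ` carrier G = carrier G"
  proof
    show "\<sigma> ` carrier G \<subseteq> carrier G" using g by (auto simp: sd)
    show "carrier G \<subseteq> \<sigma> ` carrier G"
    proof
      fix v assume v: "v \<in> carrier G"
      have "v = \<sigma> (v \<otimes> inv g)" using v g by (simp add: sd m_assoc)
      then show "v \<in> \<sigma> ` carrier G" using v g by blast
    qed
  qed
  then have bij: "bij_betw \<sigma> (carrier G) (carrier G)" using inj by (simp add: bij_betw_def)
  have arc: "cay_arc G S u v \<longleftrightarrow> cay_arc G S (\<sigma> u) (\<sigma> v)" if u: "u \<in> carrier G" and v: "v \<in> carrier G" for u v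
  proof -
    have "(v \<otimes> g) \<otimes> inv (u \<otimes> g) = v \<otimes> inv u"
      using u v g by (simp add: inv_mult_group m_assoc flip: m_assoc[of g "inv g"])
    then show ?thesis using u v g by (simp add: sd cay_arc_def)
  qed
  have ext: "\<sigma> \<in> extensional (carrier G)" by (simp add: sd)
  show "\<sigma> \<in> cay_aut G S" unfolding cay_aut_def using bij ext arc by blast
qed

lemma (in group) proper2:
  assumes x: "x \<in> carrier G" and y: "y \<in> carrier G" and ox: "ord x = 3" and oy: "ord y \<ge> 4"
  shows "proper_cay G {x, y}"
proof -
  have ninv: "inv s \<noteq> s" if "s \<in> carrier G" "ord s \<ge> 3" for s
  proof
    assume "inv s = s"
    then have "s \<otimes> s = \<one>" using that by (metis l_inv)
    then have "s [^] (2::nat) = \<one>" using that by (simp add: numeral_2_eq_2)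
    then have "ord s dvd 2" using that pow_eq_id by blast
    then show False using that by (auto dest: dvd_imp_le)
  qed
  have xy: "inv x \<noteq> y" "inv y \<noteq> x" using x y ox oy ord_inv by fastforce+
  have "inv x \<noteq> x" "inv y \<noteq> y" using ninv x y ox oy by auto
  show ?thesis
    unfolding proper_cay_def cay_arc_def
  proof (intro allI impI notI)
    fix u v
    assume a: "u \<in> carrier G \<and> v \<in> carrier G \<and> v \<otimes> inv u \<in> {x, y}"
      and b: "v \<in> carrier G \<and> u \<in> carrier G \<and> u \<otimes> inv v \<in> {x, y}"
    have "u \<otimes> inv v = inv (v \<otimes> inv u)" using a by (simp add: inv_mult_group)
    then show False using a b xy \<open>inv x \<noteq> x\<close> \<open>inv y \<noteq> y\<close> by auto
  qed
qed


lemma (in group) key: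
  assumes s: "\<sigma> \<in> cay_aut G {x, y}" and x: "x \<in> carrier G" and y: "y \<in> carrier G"
    and x3: "x \<otimes> (x \<otimes> x) = \<one>" and xy: "x \<noteq> y" and y3: "y \<otimes> (y \<otimes> y) \<noteq> \<one>"
    and nE: "x \<otimes> (y \<otimes> y) \<noteq> \<one>"
    and u: "u \<in> carrier G" and g: "g \<in> carrier G" and su: "\<sigma> u = u \<otimes> g"
  shows "\<sigma> (x \<otimes> u) = x \<otimes> (u \<otimes> g) \<and> \<sigma> (y \<otimes> u) = y \<otimes> (u \<otimes> g)"
proof -
  have S: "{x, y} \<subseteq> carrier G" using x y by auto
  have bij: "bij_betw \<sigma> (carrier G) (carrier G)"
    and pres: "\<And>a b. a \<in> carrier G \<Longrightarrow> b \<in> carrier G \<Longrightarrow> cay_arc G {x,y} a b \<longleftrightarrow> cay_arc G {x,y} (\<sigma> a) (\<sigma> b)"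
    using s unfolding cay_aut_def by blast+
  have sc: "\<sigma> a \<in> carrier G" if "a \<in> carrier G" for a using bij_betwE[OF bij] that by blast
  have inj: "inj_on \<sigma> (carrier G)" using bij by (simp add: bij_betw_def)
  have step: "\<exists>t\<in>{x,y}. \<sigma> (s \<otimes> a) = t \<otimes> \<sigma> a" if "a \<in> carrier G" "s \<in> {x,y}" for a s
  proof -
    have sc': "s \<in> carrier G" using that S by blast
    have sa: "s \<otimes> a \<in> carrier G" using sc' that by simp
    have "cay_arc G {x,y} a (s \<otimes> a)" using arc_iff[OF S, of a "s \<otimes> a"] that by blast
    then have "cay_arc G {x,y} (\<sigma> a) (\<sigma> (s \<otimes> a))" using pres[OF that(1) sa] by blast
    then show ?thesis using arc_iff[OF S, of "\<sigma> a" "\<sigma> (s \<otimes> a)"] by blast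
  qed
  have xu: "x \<otimes> u \<in> carrier G" and yu: "y \<otimes> u \<in> carrier G" using x y u by auto
  have ne: "\<sigma> (x \<otimes> u) \<noteq> \<sigma> (y \<otimes> u)"
  proof
    assume "\<sigma> (x \<otimes> u) = \<sigma> (y \<otimes> u)"
    then have "x \<otimes> u = y \<otimes> u" using inj_onD[OF inj _ xu yu] by blast
    then show False using xy x y u by simp
  qed
  obtain s1 where s1: "s1 \<in> {x,y}" "\<sigma> (x \<otimes> u) = s1 \<otimes> \<sigma> u" using step u by blast
  obtain s2 where s2: "s2 \<in> {x,y}" "\<sigma> (y \<otimes> u) = s2 \<otimes> \<sigma> u" using step u by blast
  have s1x: "s1 = x"
  proof (rule ccontr)
    assume "s1 \<noteq> x"
    then have s1y: "\<sigma> (x \<otimes> u) = y \<otimes> (u \<otimes> g)" using s1 su by auto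
    have xxu: "x \<otimes> (x \<otimes> u) \<in> carrier G" using x u by auto
    obtain s where s: "s \<in> {x,y}" "\<sigma> (x \<otimes> (x \<otimes> u)) = s \<otimes> \<sigma> (x \<otimes> u)" using step xu by blast
    have uu: "u = x \<otimes> (x \<otimes> (x \<otimes> u))" using x u x3 by (simp flip: m_assoc)
    obtain t where t: "t \<in> {x,y}" "\<sigma> (x \<otimes> (x \<otimes> (x \<otimes> u))) = t \<otimes> \<sigma> (x \<otimes> (x \<otimes> u))" using step xxu by blast
    have sC: "s \<in> carrier G" "t \<in> carrier G" using s t S by auto
    have "u \<otimes> g = t \<otimes> (s \<otimes> (y \<otimes> (u \<otimes> g)))" using t s s1y su uu by simp
    also have "\<dots> = (t \<otimes> (s \<otimes> y)) \<otimes> (u \<otimes> g)" using sC y u g by (simp add: m_assoc)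
    finally have "\<one> \<otimes> (u \<otimes> g) = (t \<otimes> (s \<otimes> y)) \<otimes> (u \<otimes> g)" using u g by simp
    then have E: "t \<otimes> (s \<otimes> y) = \<one>" using sC y u g by (metis right_cancel one_closed m_closed)
    show False
    proof -
      { assume "t = x" "s = x"
        then have "x \<otimes> (x \<otimes> y) = \<one>" using E by simp
        then have "x \<otimes> (x \<otimes> (x \<otimes> y)) = x" using x by simp
        then have "y = x" using x y x3 by (simp flip: m_assoc)
        then have False using xy by simp }
      moreover
      { assume "t = y" "s = y" then have False using E y3 by simp }
      moreover
      { assume "t = x" "s = y" then have False using E nE by simp }
      moreover
      { assume "t = y" "s = x"
        then have "y \<otimes> (x \<otimes> y) = \<one>" using E by simp
        then have "inv y \<otimes> (y \<otimes> (x \<otimes> y)) \<otimes> y = inv y \<otimes> y" using y by simp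
        then have "x \<otimes> (y \<otimes> y) = \<one>" using x y by (simp add: m_assoc flip: m_assoc[of "inv y" y])
        then have False using nE by simp }
      ultimately show False using s t by blast
    qed
  qed
  have s2y: "s2 = y" using s2 s1 s1x ne by auto
  show ?thesis using s1 s2 s1x s2y su by simp
qed



lemma (in group) inv_pow_fin:
  assumes fin: "finite (carrier G)" and a: "a \<in> carrier G"
  shows "inv a = a [^] (ord a - 1)"
proof -
  have o: "ord a \<ge> 1" using ord_ge_1[OF fin a] .
  have "a [^] (ord a - 1) \<otimes> a = a [^] (Suc (ord a - 1))" using a by simp
  also have "\<dots> = \<one>" using o a by simp
  finally show ?thesis using a by (simp add: inv_equality)
qed

lemma (in group) aut_sub:
  assumes fin: "finite (carrier G)" and x: "x \<in> carrier G" and y: "y \<in> carrier G"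
    and gen: "generate G {x, y} = carrier G"
    and x3: "x \<otimes> (x \<otimes> x) = \<one>" and xy: "x \<noteq> y" and y3: "y \<otimes> (y \<otimes> y) \<noteq> \<one>"
    and nE: "x \<otimes> (y \<otimes> y) \<noteq> \<one>"
  shows "cay_aut G {x, y} \<subseteq> right_regular G"
proof
  fix \<sigma> assume s: "\<sigma> \<in> cay_aut G {x, y}"
  have bij: "bij_betw \<sigma> (carrier G) (carrier G)" and ext: "\<sigma> \<in> extensional (carrier G)"
    using s unfolding cay_aut_def by blast+
  define g where "g = \<sigma> \<one>"
  have g: "g \<in> carrier G" unfolding g_def using bij_betwE[OF bij] by blast
  define T where "T = {w \<in> carrier G. \<sigma> w = w \<otimes> g}"
  define M where "M = {a \<in> carrier G. \<forall>w\<in>T. a \<otimes> w \<in> T}"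
  have xM: "x \<in> M" and yM: "y \<in> M"
    using key[OF s x y x3 xy y3 nE _ g] x y g by (auto simp: M_def T_def m_assoc)
  have oneM: "\<one> \<in> M" by (auto simp: M_def T_def)
  have mulM: "a \<otimes> b \<in> M" if "a \<in> M" "b \<in> M" for a b
    using that by (auto simp: M_def T_def m_assoc)
  have powM: "a [^] (n::nat) \<in> M" if "a \<in> M" for a n
  proof (induction n)
    case 0 then show ?case using oneM by simp
  next
    case (Suc n) then show ?case using mulM that by simp
  qed
  have sub: "subgroup M G"
  proof (rule subgroupI)
    show "M \<subseteq> carrier G" by (auto simp: M_def)
    show "M \<noteq> {}" using oneM by blast
    show "inv a \<in> M" if "a \<in> M" for a
      using inv_pow_fin[OF fin, of a] powM[OF that] that by (simp add: M_def)
    show "a \<otimes> b \<in> M" if "a \<in> M" "b \<in> M" for a b using mulM that by blast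
  qed
  have "carrier G \<subseteq> M" using generate_subgroup_incl[OF _ sub, of "{x,y}"] xM yM gen by simp
  moreover have oneT: "\<one> \<in> T" using g by (simp add: T_def g_def)
  ultimately have all: "\<sigma> u = u \<otimes> g" if "u \<in> carrier G" for u
  proof -
    have "u \<in> M" using that \<open>carrier G \<subseteq> M\<close> by blast
    then have "u \<otimes> \<one> \<in> T" using oneT unfolding M_def by blast
    then show ?thesis using that by (simp add: T_def)
  qed
  have "\<sigma> = restrict (\<lambda>u. u \<otimes> g) (carrier G)"
  proof
    fix u show "\<sigma> u = restrict (\<lambda>u. u \<otimes> g) (carrier G) u"
      using all ext by (cases "u \<in> carrier G") (auto simp: extensional_def)
  qed
  then show "\<sigma> \<in> right_regular G" using g by (auto simp: right_regular_def)
qed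



lemma (in group) cyc6:
  assumes y: "y \<in> carrier G" and gen: "generate G {y} = carrier G" and oy: "ord y = 6"
  shows "G \<cong> integer_mod_group 6"
proof -
  define h where "h = (\<lambda>k::int. y [^] k)"
  have eqv: "h a = h b \<longleftrightarrow> 6 dvd (b - a)" for a b
    using int_pow_eq[OF y, of a b] oy by (simp add: h_def)
  have modh: "h (k mod 6) = h k" for k
    unfolding eqv by (simp add: mod_eq_dvd_iff[symmetric] mod_diff_eq)
  have hom: "h \<in> hom (integer_mod_group 6) G"
  proof (rule homI)
    show "h a \<in> carrier G" for a using y by (simp add: h_def)
    fix a b
    have "h ((a + b) mod 6) = h (a + b)" by (rule modh)
    also have "\<dots> = h a \<otimes> h b" using y by (simp add: h_def int_pow_mult)
    finally show "h (a \<otimes>\<^bsub>integer_mod_group 6\<^esub> b) = h a \<otimes> h b" by simp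
  qed
  have inj: "inj_on h (carrier (integer_mod_group 6))"
  proof (rule inj_onI)
    fix a b assume a: "a \<in> carrier (integer_mod_group 6)" and b: "b \<in> carrier (integer_mod_group 6)"
      and e: "h a = h b"
    have "6 dvd (b - a)" using e eqv by blast
    moreover have "0 \<le> a" "a < 6" "0 \<le> b" "b < 6" using a b by (auto simp: carrier_integer_mod_group)
    ultimately show "a = b" by (auto simp: dvd_def) (smt (verit) mult_less_cancel_left)
  qed
  have surj: "h ` carrier (integer_mod_group 6) = carrier G"
  proof
    show "h ` carrier (integer_mod_group 6) \<subseteq> carrier G" using y by (auto simp: h_def)
    show "carrier G \<subseteq> h ` carrier (integer_mod_group 6)"
    proof
      fix v assume "v \<in> carrier G"
      then obtain k :: int where k: "v = y [^] k" using gen generate_pow[OF y] by auto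
      have "v = h (k mod 6)" using modh k by (simp add: h_def)
      moreover have "k mod 6 \<in> carrier (integer_mod_group 6)" by (simp add: carrier_integer_mod_group)
      ultimately show "v \<in> h ` carrier (integer_mod_group 6)" by blast
    qed
  qed
  have "h \<in> iso (integer_mod_group 6) G" using hom inj surj by (simp add: iso_iff)
  then have "integer_mod_group 6 \<cong> G" by (rule is_isoI)
  then show ?thesis using group.iso_sym[OF group_integer_mod_group] by blast
qed

lemma (in group) main:
  assumes fin: "finite (carrier G)" and x: "x \<in> carrier G" and y: "y \<in> carrier G"
    and gen: "generate G {x, y} = carrier G"
    and ox: "ord x = 3" and oy: "ord y \<ge> 4"
  shows "is_ORR G {x, y} \<or> (ord y = 6 \<and> x = y [^] (4::nat) \<and> G \<cong> integer_mod_group 6)"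
proof -
  have p3: "a [^] (3::nat) = a \<otimes> (a \<otimes> a)" if "a \<in> carrier G" for a
    using that by (simp add: numeral_3_eq_3 m_assoc)
  have x3: "x \<otimes> (x \<otimes> x) = \<one>" using pow_ord_eq_1[OF x] ox p3[OF x] by simp
  have xy: "x \<noteq> y" using ox oy by auto
  have y3: "y \<otimes> (y \<otimes> y) \<noteq> \<one>"
  proof
    assume "y \<otimes> (y \<otimes> y) = \<one>"
    then have "ord y dvd 3" using pow_eq_id[OF y, of 3] p3[OF y] by simp
    then show False using oy by (auto dest: dvd_imp_le)
  qed
  show ?thesis
  proof (cases "x \<otimes> (y \<otimes> y) = \<one>")
    case False
    have S: "{x, y} \<subseteq> carrier G" using x y by auto
    have "cay_aut G {x, y} = right_regular G"
      using aut_sub[OF fin x y gen x3 xy y3 False] rr_sub[OF S] by blast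
    then show ?thesis using proper2[OF x y ox oy] by (simp add: is_ORR_def)
  next
    case True
    have yy: "y \<otimes> y \<in> carrier G" using y by simp
    have xi: "x = inv (y \<otimes> y)" using inv_equality[OF True yy x] by simp
    have "inv ((y \<otimes> y) [^] (3::nat)) = \<one>"
      using x3 p3[OF x] xi nat_pow_inv[OF yy, of 3] by simp
    then have "(y \<otimes> y) [^] (3::nat) = \<one>" using yy by (metis inv_inv inv_one nat_pow_closed)
    moreover have "y \<otimes> y = y [^] (2::nat)" using y by (simp add: numeral_2_eq_2)
    ultimately have y6: "y [^] (6::nat) = \<one>" using y by (simp add: nat_pow_pow)
    then have "ord y dvd 6" using pow_eq_id[OF y] by blast
    then have "ord y \<le> 6" by (auto dest: dvd_imp_le)
    then have o6: "ord y = 6" using oy \<open>ord y dvd 6\<close>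
      by (cases "ord y = 4"; cases "ord y = 5") auto
    have "y [^] (4::nat) \<otimes> y [^] (2::nat) = \<one>" using y y6 by (simp add: nat_pow_mult)
    then have "inv (y [^] (2::nat)) = y [^] (4::nat)" using y by (simp add: inv_equality)
    then have x4: "x = y [^] (4::nat)" using xi \<open>y \<otimes> y = y [^] (2::nat)\<close> by simp
    have "x \<in> generate G {y}" using generate_pow_on_finite_carrier[OF fin y] x4 by blast
    then have "generate G {x, y} \<subseteq> generate G {y}"
      using generate_subgroup_incl[OF _ generate_is_subgroup, of "{x,y}" "{y}"] y generate.incl[of y "{y}"]
      by blast
    moreover have "generate G {y} \<subseteq> carrier G" using y generate_incl by blast
    ultimately have "generate G {y} = carrier G" using gen by blast
    then show ?thesis using cyc6[OF y _ o6] o6 x4 by blast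
  qed
qed


theorem lemma2p4:
  fixes G :: "('a, 'b) monoid_scheme" and x y :: 'a
  assumes "group G" and "finite (carrier G)"
    and "x \<in> carrier G" and "y \<in> carrier G"
    and "generate G {x, y} = carrier G"
    and "group.ord G x = 3" and "group.ord G y \<ge> 4"
  shows "is_ORR G {x, y} \<or>
    (group.ord G y = 6 \<and> x = y [^]\<^bsub>G\<^esub> (4::nat) \<and> G \<cong> integer_mod_group 6)"
  using group.main[OF assms(1) assms(2-7)] .

end
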